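(* Let $\alpha\in(0,1]$, let $I\subseteq\mathbb R$ be an interval with $0$ in its interior, and let $\gamma:I\to\mathbb H$ be continuous with, for some $\varrho>0$, $$[\gamma_0^{-1}\gamma_t]^{\mathsf h}\le\varrho|t|^{\frac{1+\alpha}2}\quad\text{and}\quad|(\gamma_0^{-1}\gamma_t)^{\mathsf v}-t|\le\varrho^2|t|^{1+\alpha}\qquad\text{for all }t\in I.$$ Then there exists $\delta_2>0$ with $[-\delta_2,\delta_2]\subseteq I$ such that for every $\delta\in(0,\delta_2]$ there is $\varepsilon_2=\varepsilon_2(\delta)>0$ with the property: for every $x\in B(\gamma_0,\varepsilon_2)$ there exists $t=t(x)\in[-\delta,\delta]$ with $[\gamma_t^{-1}x]^{\mathsf v}\le[\gamma_t^{-1}x]^{\mathsf h}$.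
   Context: The Heisenberg group $\mathbb H$ is $\mathbb R^3$ with product $(x^1,x^2,x^3)(y^1,y^2,y^3)=(x^1+y^1,x^2+y^2,x^3+y^3+x^1y^2-x^2y^1)$, inverse $x^{-1}=-x$. For $x\in\mathbb H$: $x^{\mathsf h}=(x^1,x^2)$, $x^{\mathsf v}=x^3$, $[x]^{\mathsf h}=|x^{\mathsf h}|$, $[x]^{\mathsf v}=\sqrt{|x^3|}$. $\mathsf d$ is a fixed distance on $\mathbb H$, left-invariant and $1$-homogeneous w.r.t. dilations $\delta_r(x)=(rx^1,rx^2,r^2x^3)$; $B(x,r)$ is the open $\mathsf d$-ball. *)

theory Defs
  imports "HOL-Analysis.Analysis"
begin

type_synonym heis = "real \<times> real \<times> real"

definition hmul :: "heis \<Rightarrow> heis \<Rightarrow> heis" where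
  "hmul x y = (case x of (x1, x2, x3) \<Rightarrow> case y of (y1, y2, y3) \<Rightarrow>
      (x1 + y1, x2 + y2, x3 + y3 + x1 * y2 - x2 * y1))"

definition hinv :: "heis \<Rightarrow> heis" where
  "hinv x = (case x of (x1, x2, x3) \<Rightarrow> (- x1, - x2, - x3))"

definition hvert :: "heis \<Rightarrow> real" where
  "hvert x = snd (snd x)"

definition hnormh :: "heis \<Rightarrow> real" where
  "hnormh x = sqrt ((fst x)\<^sup>2 + (fst (snd x))\<^sup>2)"

definition hnormv :: "heis \<Rightarrow> real" where
  "hnormv x = sqrt \<bar>snd (snd x)\<bar>"

definition hdil :: "real \<Rightarrow> heis \<Rightarrow> heis" where
  "hdil r x = (case x of (x1, x2, x3) \<Rightarrow> (r * x1, r * x2, r\<^sup>2 * x3))"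

definition homog_dist :: "(heis \<Rightarrow> heis \<Rightarrow> real) \<Rightarrow> bool" where
  "homog_dist d \<longleftrightarrow>
     (\<forall>x y. d x y \<ge> 0) \<and>
     (\<forall>x y. d x y = 0 \<longleftrightarrow> x = y) \<and>
     (\<forall>x y. d x y = d y x) \<and>
     (\<forall>x y z. d x z \<le> d x y + d y z) \<and>
     (\<forall>x y z. d (hmul z x) (hmul z y) = d x y) \<and>
     (\<forall>r x y. r > 0 \<longrightarrow> d (hdil r x) (hdil r y) = r * d x y)"

definition hball :: "(heis \<Rightarrow> heis \<Rightarrow> real) \<Rightarrow> heis \<Rightarrow> real \<Rightarrow> heis set" where
  "hball d x r = {y. d x y < r}"

end

theory Submission
  imports Defs
begin

lemma hmul_alt: "hmul x y = (fst x + fst y, fst (snd x) + fst (snd y),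
   snd (snd x) + snd (snd y) + fst x * fst (snd y) - fst (snd x) * fst y)"
  by (cases x; cases y) (auto simp: hmul_def)

lemma hinv_alt: "hinv x = (- fst x, - fst (snd x), - snd (snd x))"
  by (cases x) (auto simp: hinv_def)

lemma hinv_self: "hmul (hinv a) a = (0,0,0)"
  by (simp add: hmul_alt hinv_alt)

lemma d_left: assumes "homog_dist d" shows "d a b = d (0,0,0) (hmul (hinv a) b)"
proof -
  have "d (hmul (hinv a) a) (hmul (hinv a) b) = d a b" using assms unfolding homog_dist_def by blast
  then show ?thesis by (simp add: hinv_self)
qed

lemma d_self: assumes "homog_dist d" shows "d x x = 0"
  using assms unfolding homog_dist_def by blast

lemma d_dil: assumes "homog_dist d" "r > 0" shows "d (0,0,0) (hdil r y) = r * d (0,0,0) y"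
proof -
  have "d (hdil r (0,0,0)) (hdil r y) = r * d (0,0,0) y" using assms unfolding homog_dist_def by blast
  then show ?thesis by (simp add: hdil_def)
qed

lemma d_e1: assumes "homog_dist d" shows "d (0,0,0) (s,0,0) \<le> \<bar>s\<bar> * (d (0,0,0) (1,0,0) + d (0,0,0) (-1,0,0))"
proof -
  have nn: "\<And>x y. d x y \<ge> 0" using assms unfolding homog_dist_def by blast
  consider "s > 0" | "s = 0" | "s < 0" by linarith
  then show ?thesis
  proof cases
    case 1
    have "d (0,0,0) (s,0,0) = s * d (0,0,0) (1,0,0)" using d_dil[OF assms 1, of "(1,0,0)"] by (simp add: hdil_def)
    then show ?thesis using 1 nn[of "(0,0,0)" "(-1,0,0)"] by (simp add: algebra_simps mult_nonpos_nonneg)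
  next
    case 2 then show ?thesis using d_self[OF assms, of "(0,0,0)"] by simp
  next
    case 3
    have "d (0,0,0) (s,0,0) = (-s) * d (0,0,0) (-1,0,0)" using d_dil[OF assms, of "-s" "(-1,0,0)"] 3 by (simp add: hdil_def)
    then show ?thesis using 3 nn[of "(0,0,0)" "(1,0,0)"] by (simp add: algebra_simps mult_nonpos_nonneg)
  qed
qed

lemma d_e2: assumes "homog_dist d" shows "d (0,0,0) (0,s,0) \<le> \<bar>s\<bar> * (d (0,0,0) (0,1,0) + d (0,0,0) (0,-1,0))"
proof -
  have nn: "\<And>x y. d x y \<ge> 0" using assms unfolding homog_dist_def by blast
  consider "s > 0" | "s = 0" | "s < 0" by linarith
  then show ?thesis
  proof cases
    case 1
    have "d (0,0,0) (0,s,0) = s * d (0,0,0) (0,1,0)" using d_dil[OF assms 1, of "(0,1,0)"] by (simp add: hdil_def)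
    then show ?thesis using 1 nn[of "(0,0,0)" "(0,-1,0)"] by (simp add: algebra_simps mult_nonpos_nonneg)
  next
    case 2 then show ?thesis using d_self[OF assms, of "(0,0,0)"] by simp
  next
    case 3
    have "d (0,0,0) (0,s,0) = (-s) * d (0,0,0) (0,-1,0)" using d_dil[OF assms, of "-s" "(0,-1,0)"] 3 by (simp add: hdil_def)
    then show ?thesis using 3 nn[of "(0,0,0)" "(0,1,0)"] by (simp add: algebra_simps mult_nonpos_nonneg)
  qed
qed

lemma d_e3: assumes "homog_dist d" shows "d (0,0,0) (0,0,s) \<le> sqrt \<bar>s\<bar> * (d (0,0,0) (0,0,1) + d (0,0,0) (0,0,-1))"
proof -
  have nn: "\<And>x y. d x y \<ge> 0" using assms unfolding homog_dist_def by blast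
  consider "s > 0" | "s = 0" | "s < 0" by linarith
  then show ?thesis
  proof cases
    case 1
    have "d (0,0,0) (0,0,s) = sqrt s * d (0,0,0) (0,0,1)" using d_dil[OF assms, of "sqrt s" "(0,0,1)"] 1 by (simp add: hdil_def)
    then show ?thesis using 1 nn[of "(0,0,0)" "(0,0,-1)"] by (simp add: algebra_simps mult_nonpos_nonneg)
  next
    case 2 then show ?thesis using d_self[OF assms, of "(0,0,0)"] by simp
  next
    case 3
    have "d (0,0,0) (0,0,s) = sqrt (-s) * d (0,0,0) (0,0,-1)" using d_dil[OF assms, of "sqrt (-s)" "(0,0,-1)"] 3 by (simp add: hdil_def)
    then show ?thesis using 3 nn[of "(0,0,0)" "(0,0,1)"] by (simp add: algebra_simps mult_nonpos_nonneg)
  qed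
qed

lemma d_upper: assumes "homog_dist d"
  obtains C where "C \<ge> 0" "\<And>w. d (0,0,0) w \<le> C * (\<bar>fst w\<bar> + \<bar>fst (snd w)\<bar> + sqrt \<bar>snd (snd w) - fst w * fst (snd w)\<bar>)"
proof -
  have nn: "\<And>x y. d x y \<ge> 0" and tri: "\<And>x y z. d x z \<le> d x y + d y z" using assms unfolding homog_dist_def by blast+
  define A1 where "A1 = d (0,0,0) (1,0,0) + d (0,0,0) (-1,0,0)"
  define A2 where "A2 = d (0,0,0) (0,1,0) + d (0,0,0) (0,-1,0)"
  define A3 where "A3 = d (0,0,0) (0,0,1) + d (0,0,0) (0,0,-1)"
  define C where "C = A1 + A2 + A3"
  have A: "A1 \<ge> 0" "A2 \<ge> 0" "A3 \<ge> 0" unfolding A1_def A2_def A3_def using nn by (simp add: add_nonneg_nonneg)+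
  show ?thesis
  proof (rule that[of C])
    show "C \<ge> 0" using A C_def by simp
    fix w :: heis
    obtain w1 w2 w3 where w: "w = (w1,w2,w3)" by (cases w) auto
    have 1: "d (0,0,0) w \<le> d (0,0,0) (w1,0,0) + d (w1,0,0) w" using tri by blast
    have 2: "d (w1,0,0) w = d (0,0,0) (0,w2,w3 - w1*w2)"
      by (subst d_left[OF assms]) (simp add: w hmul_alt hinv_alt)
    have 3: "d (0,0,0) (0,w2,w3 - w1*w2) \<le> d (0,0,0) (0,w2,0) + d (0,w2,0) (0,w2,w3 - w1*w2)" using tri by blast
    have 4: "d (0,w2,0) (0,w2,w3 - w1*w2) = d (0,0,0) (0,0,w3 - w1*w2)"
      by (subst d_left[OF assms]) (simp add: hmul_alt hinv_alt)
    have "d (0,0,0) w \<le> \<bar>w1\<bar> * A1 + \<bar>w2\<bar> * A2 + sqrt \<bar>w3 - w1*w2\<bar> * A3"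
      using 1 2 3 4 d_e1[OF assms, of w1] d_e2[OF assms, of w2] d_e3[OF assms, of "w3 - w1*w2"]
      unfolding A1_def A2_def A3_def by linarith
    also have "\<dots> \<le> C * (\<bar>w1\<bar> + \<bar>w2\<bar> + sqrt \<bar>w3 - w1*w2\<bar>)"
      unfolding C_def using A by (simp add: algebra_simps add_mono mult_left_mono)
    finally show "d (0,0,0) w \<le> C * (\<bar>fst w\<bar> + \<bar>fst (snd w)\<bar> + sqrt \<bar>snd (snd w) - fst w * fst (snd w)\<bar>)"
      by (simp add: w)
  qed
qed


lemma d_cont: assumes "homog_dist d" shows "continuous_on UNIV (\<lambda>y. d (0,0,0) y)"
proof -
  obtain C where C: "C \<ge> 0" "\<And>w. d (0,0,0) w \<le> C * (\<bar>fst w\<bar> + \<bar>fst (snd w)\<bar> + sqrt \<bar>snd (snd w) - fst w * fst (snd w)\<bar>)"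
    using d_upper[OF assms] by blast
  have tri: "\<And>x y z. d x z \<le> d x y + d y z" and sym: "\<And>x y. d x y = d y x" using assms unfolding homog_dist_def by blast+
  define U where "U = (\<lambda>w::heis. C * (\<bar>fst w\<bar> + \<bar>fst (snd w)\<bar> + sqrt \<bar>snd (snd w) - fst w * fst (snd w)\<bar>))"
  have "isCont (\<lambda>y. d (0,0,0) y) y" for y
  proof -
    have lim: "((\<lambda>z. U (hmul (hinv y) z)) \<longlongrightarrow> U (hmul (hinv y) y)) (at y)"
      unfolding U_def hmul_alt hinv_alt by (intro tendsto_intros)
    have "U (hmul (hinv y) y) = 0" unfolding U_def by (simp add: hmul_alt hinv_alt)
    with lim have lim0: "((\<lambda>z. U (hmul (hinv y) z)) \<longlongrightarrow> 0) (at y)" by simp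
    have "norm (d (0,0,0) z - d (0,0,0) y) \<le> U (hmul (hinv y) z)" for z
    proof -
      have "d (0,0,0) z \<le> d (0,0,0) y + d y z" "d (0,0,0) y \<le> d (0,0,0) z + d y z"
        using tri[of "(0,0,0)" y z] tri[of "(0,0,0)" z y] sym[of z y] by auto
      moreover have "d y z \<le> U (hmul (hinv y) z)" using C(2) d_left[OF assms, of y z] unfolding U_def by simp
      ultimately show ?thesis by simp
    qed
    then have "((\<lambda>z. d (0,0,0) z - d (0,0,0) y) \<longlongrightarrow> 0) (at y)"
      by (intro Lim_null_comparison[OF _ lim0]) auto
    then show ?thesis unfolding isCont_def using Lim_null by blast
  qed
  then show ?thesis by (simp add: continuous_at_imp_continuous_on)
qed

definition gg :: "heis \<Rightarrow> real" where "gg y = \<bar>fst y\<bar> + \<bar>fst (snd y)\<bar> + sqrt \<bar>snd (snd y)\<bar>"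

lemma d_lower: assumes "homog_dist d" obtains m where "m > 0" "\<And>y. m * gg y \<le> d (0,0,0) y"
proof -
  define S where "S = {y. gg y = 1}"
  have gc: "continuous_on UNIV gg" unfolding gg_def by (intro continuous_intros)
  have cS: "closed S" unfolding S_def by (rule closed_Collect_eq[OF gc]) simp
  have bS: "bounded S" unfolding bounded_iff
  proof (intro exI ballI)
    fix y assume "y \<in> S"
    then have g1: "gg y = 1" by (simp add: S_def)
    obtain a b c where y: "y = (a,b,c)" by (cases y) auto
    have g1': "\<bar>a\<bar> + \<bar>b\<bar> + sqrt \<bar>c\<bar> = 1" using g1 by (simp add: gg_def y)
    have "sqrt \<bar>c\<bar> \<ge> 0" by simp
    then have "\<bar>a\<bar> \<le> 1" "\<bar>b\<bar> \<le> 1" "sqrt \<bar>c\<bar> \<le> 1" using g1' by linarith+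
    then have "\<bar>c\<bar> \<le> 1" by simp
    have "norm y \<le> norm a + norm (b,c)" unfolding y by (rule norm_Pair_le)
    also have "\<dots> \<le> norm a + (norm b + norm c)" using norm_Pair_le[of b c] by simp
    finally show "norm y \<le> 3" using \<open>\<bar>a\<bar> \<le> 1\<close> \<open>\<bar>b\<bar> \<le> 1\<close> \<open>\<bar>c\<bar> \<le> 1\<close> by simp
  qed
  have kS: "compact S" using cS bS compact_eq_bounded_closed by blast
  have "(1,0,0) \<in> S" unfolding S_def by (simp add: gg_def)
  then have neS: "S \<noteq> {}" by blast
  obtain z0 where z0: "z0 \<in> S" "\<And>y. y \<in> S \<Longrightarrow> d (0,0,0) z0 \<le> d (0,0,0) y"
    using continuous_attains_inf[OF kS neS continuous_on_subset[OF d_cont[OF assms]]] by blast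
  have "z0 \<noteq> (0,0,0)" using z0(1) by (auto simp: S_def gg_def)
  then have mpos: "d (0,0,0) z0 > 0" using assms unfolding homog_dist_def
    by (metis less_eq_real_def)
  show ?thesis
  proof (rule that[OF mpos])
    fix y
    show "d (0,0,0) z0 * gg y \<le> d (0,0,0) y"
    proof (cases "gg y = 0")
      case True
      have "d (0,0,0) y \<ge> 0" using assms unfolding homog_dist_def by blast
      then show ?thesis using True by simp
    next
      case False
      define r where "r = gg y"
      have rpos: "r > 0" using False unfolding r_def gg_def by (smt (verit) real_sqrt_ge_zero)
      obtain a b c where y: "y = (a,b,c)" by (cases y) auto
      define z where "z = hdil (1/r) y"
      have yz: "y = hdil r z" unfolding z_def y hdil_def using rpos by (simp add: power2_eq_square)
      have "gg z = gg y / r" unfolding z_def y hdil_def gg_def using rpos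
        by (simp add: abs_mult real_sqrt_divide add_divide_distrib power2_eq_square real_sqrt_mult)
      then have "z \<in> S" unfolding S_def r_def using rpos r_def by simp
      then have "d (0,0,0) z0 \<le> d (0,0,0) z" by (rule z0(2))
      then have "r * d (0,0,0) z0 \<le> r * d (0,0,0) z" using rpos by simp
      also have "\<dots> = d (0,0,0) y" using d_dil[OF assms rpos, of z] yz by simp
      finally show ?thesis unfolding r_def by (simp add: mult.commute)
    qed
  qed
qed


lemma abs_le_hnormh: "\<bar>fst z\<bar> \<le> hnormh z" "\<bar>fst (snd z)\<bar> \<le> hnormh z"
proof -
  have "\<bar>fst z\<bar> = sqrt ((fst z)\<^sup>2)" by simp
  also have "\<dots> \<le> hnormh z" unfolding hnormh_def by (rule real_sqrt_le_mono) simp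
  finally show "\<bar>fst z\<bar> \<le> hnormh z" .
  have "\<bar>fst (snd z)\<bar> = sqrt ((fst (snd z))\<^sup>2)" by simp
  also have "\<dots> \<le> hnormh z" unfolding hnormh_def by (rule real_sqrt_le_mono) simp
  finally show "\<bar>fst (snd z)\<bar> \<le> hnormh z" .
qed

lemma V_eq: "hvert (hmul (hinv g) x) =
   snd (snd (hmul (hinv g0) x)) - snd (snd (hmul (hinv g0) g)) - fst (hmul (hinv g0) g) * fst (snd (hmul (hinv g0) x))
   + fst (snd (hmul (hinv g0) g)) * fst (hmul (hinv g0) x)"
  by (simp add: hmul_alt hinv_alt hvert_def algebra_simps)

theorem mainTheorem4:
  fixes d :: "heis \<Rightarrow> heis \<Rightarrow> real"
    and \<alpha> \<rho> :: real and I :: "real set" and \<gamma> :: "real \<Rightarrow> heis"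
  assumes "homog_dist d"
    and "0 < \<alpha>" and "\<alpha> \<le> 1"
    and "is_interval I" and "0 \<in> interior I"
    and "continuous_on I \<gamma>"
    and "\<rho> > 0"
    and "\<forall>t\<in>I. hnormh (hmul (hinv (\<gamma> 0)) (\<gamma> t)) \<le> \<rho> * \<bar>t\<bar> powr ((1 + \<alpha>) / 2)"
    and "\<forall>t\<in>I. \<bar>hvert (hmul (hinv (\<gamma> 0)) (\<gamma> t)) - t\<bar> \<le> \<rho>\<^sup>2 * \<bar>t\<bar> powr (1 + \<alpha>)"
  shows "\<exists>\<delta>2>0. {-\<delta>2..\<delta>2} \<subseteq> I \<and>
           (\<forall>\<delta>. 0 < \<delta> \<and> \<delta> \<le> \<delta>2 \<longrightarrow>
              (\<exists>\<epsilon>2>0. \<forall>x\<in>hball d (\<gamma> 0) \<epsilon>2. \<exists>t\<in>{-\<delta>..\<delta>}.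
                  hnormv (hmul (hinv (\<gamma> t)) x) \<le> hnormh (hmul (hinv (\<gamma> t)) x)))"
proof -
  note hd = assms(1) and ap = assms(2) and rp = assms(7) and H = assms(8) and Vh = assms(9)
  obtain r where r: "r > 0" "ball 0 r \<subseteq> I" using assms(5) mem_interior by blast
  obtain m where m: "m > 0" "\<And>y. m * gg y \<le> d (0,0,0) y" using d_lower[OF hd] by blast
  define c where "c = 1 / (2 * \<rho>\<^sup>2)"
  have cp: "c > 0" unfolding c_def using rp by simp
  define \<delta>2 where "\<delta>2 = min (r/2) (c powr (1/\<alpha>))"
  have d2p: "\<delta>2 > 0" unfolding \<delta>2_def using r cp by simp
  have sub: "{-\<delta>2..\<delta>2} \<subseteq> I"
  proof
    fix t assume "t \<in> {-\<delta>2..\<delta>2}"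
    then have "\<bar>t\<bar> < r" unfolding \<delta>2_def using r by auto
    then show "t \<in> I" using r(2) by (auto simp: dist_real_def)
  qed
  show ?thesis
  proof (rule exI[of _ \<delta>2], intro conjI allI impI d2p sub)
    fix \<delta> assume "0 < \<delta> \<and> \<delta> \<le> \<delta>2"
    then have dp: "0 < \<delta>" and dle: "\<delta> \<le> \<delta>2" by auto
    have dI: "{-\<delta>..\<delta>} \<subseteq> I" using sub dle by auto
    have "\<delta> powr \<alpha> \<le> (c powr (1/\<alpha>)) powr \<alpha>"
      using dle dp ap unfolding \<delta>2_def by (intro powr_mono2) auto
    also have "\<dots> = c" using ap cp by (simp add: powr_powr)
    finally have dal: "\<delta> powr \<alpha> \<le> c" .
    have key: "\<rho>\<^sup>2 * \<delta> powr (1 + \<alpha>) \<le> \<delta> / 2"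
    proof -
      have "\<rho>\<^sup>2 * \<delta> powr (1 + \<alpha>) = \<rho>\<^sup>2 * \<delta> * \<delta> powr \<alpha>" using dp by (simp add: powr_add)
      also have "\<dots> \<le> \<rho>\<^sup>2 * \<delta> * c" using dal dp rp by (intro mult_left_mono) auto
      also have "\<dots> = \<delta> / 2" unfolding c_def using rp by (simp add: field_simps)
      finally show ?thesis .
    qed
    define K where "K = \<rho> * \<delta> powr ((1 + \<alpha>) / 2)"
    have Kp: "K \<ge> 0" unfolding K_def using rp by simp
    define e where "e = \<delta> / (4 + 8 * K)"
    have ep: "e > 0" unfolding e_def using dp Kp by simp
    have e4: "e * (4 + 8 * K) = \<delta>" unfolding e_def using Kp by simp
    have eK: "e + 2 * K * e = \<delta> / 4" using e4 by (simp add: algebra_simps)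
    define \<epsilon>2 where "\<epsilon>2 = m * min e (sqrt e)"
    show "\<exists>\<epsilon>2>0. \<forall>x\<in>hball d (\<gamma> 0) \<epsilon>2. \<exists>t\<in>{-\<delta>..\<delta>}.
                  hnormv (hmul (hinv (\<gamma> t)) x) \<le> hnormh (hmul (hinv (\<gamma> t)) x)"
    proof (intro exI[of _ \<epsilon>2] conjI ballI)
      show "\<epsilon>2 > 0" unfolding \<epsilon>2_def using m ep by simp
      fix x assume "x \<in> hball d (\<gamma> 0) \<epsilon>2"
      then have xb: "d (\<gamma> 0) x < \<epsilon>2" by (simp add: hball_def)
      define y where "y = hmul (hinv (\<gamma> 0)) x"
      have "m * gg y < m * min e (sqrt e)" using m(2)[of y] xb d_left[OF hd, of "\<gamma> 0" x]
        unfolding y_def \<epsilon>2_def by simp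
      then have gy: "gg y < min e (sqrt e)" using m(1) by simp
      have s0: "sqrt \<bar>snd (snd y)\<bar> \<ge> 0" by simp
      have y1: "\<bar>fst y\<bar> < e" and y2: "\<bar>fst (snd y)\<bar> < e" and y3': "sqrt \<bar>snd (snd y)\<bar> < sqrt e"
      proof -
        have g1: "\<bar>fst y\<bar> + \<bar>fst (snd y)\<bar> + sqrt \<bar>snd (snd y)\<bar> < e"
          and g2: "\<bar>fst y\<bar> + \<bar>fst (snd y)\<bar> + sqrt \<bar>snd (snd y)\<bar> < sqrt e"
          using gy unfolding gg_def by auto
        have "\<bar>fst y\<bar> \<ge> 0" "\<bar>fst (snd y)\<bar> \<ge> 0" by auto
        then show "\<bar>fst y\<bar> < e" "\<bar>fst (snd y)\<bar> < e" "sqrt \<bar>snd (snd y)\<bar> < sqrt e"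
          using g1 g2 s0 by linarith+
      qed
      have y3: "\<bar>snd (snd y)\<bar> < e" using y3' by simp
      define V where "V = (\<lambda>t. hvert (hmul (hinv (\<gamma> t)) x))"
      define \<eta> where "\<eta> = (\<lambda>t. hmul (hinv (\<gamma> 0)) (\<gamma> t))"
      have Veq: "V t = snd (snd y) - snd (snd (\<eta> t)) - fst (\<eta> t) * fst (snd y) + fst (snd (\<eta> t)) * fst y" for t
        unfolding V_def \<eta>_def y_def by (rule V_eq)
      have bnd: "\<bar>- fst (\<eta> t) * fst (snd y) + fst (snd (\<eta> t)) * fst y\<bar> \<le> 2 * K * e"
        if "t \<in> I" "\<bar>t\<bar> = \<delta>" for t
      proof -
        have hK: "hnormh (\<eta> t) \<le> K" using H that unfolding \<eta>_def K_def by auto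
        have a1: "\<bar>fst (\<eta> t)\<bar> \<le> K" "\<bar>fst (snd (\<eta> t))\<bar> \<le> K" using abs_le_hnormh[of "\<eta> t"] hK by auto
        have "\<bar>fst (\<eta> t) * fst (snd y)\<bar> \<le> K * e" unfolding abs_mult
          using a1 y2 by (intro mult_mono) auto
        moreover have "\<bar>fst (snd (\<eta> t)) * fst y\<bar> \<le> K * e" unfolding abs_mult
          using a1 y1 by (intro mult_mono) auto
        ultimately show ?thesis by linarith
      qed
      have vb: "\<bar>snd (snd (\<eta> t)) - t\<bar> \<le> \<delta> / 2" if "t \<in> I" "\<bar>t\<bar> = \<delta>" for t
        using Vh that key unfolding \<eta>_def hvert_def by fastforce
      have dI1: "\<delta> \<in> I" "-\<delta> \<in> I" using dI dp by auto
      have V1: "V \<delta> \<le> 0" using Veq[of \<delta>] bnd[OF dI1(1)] vb[OF dI1(1)] y3 eK dp by (simp; linarith)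
      have V2: "0 \<le> V (-\<delta>)" using Veq[of "-\<delta>"] bnd[OF dI1(2)] vb[OF dI1(2)] y3 eK dp by (simp; linarith)
      have gc: "continuous_on {-\<delta>..\<delta>} \<gamma>" using continuous_on_subset[OF assms(6) dI] .
      have Vc: "continuous_on {-\<delta>..\<delta>} V" unfolding V_def hvert_def hmul_alt hinv_alt
        using gc by (intro continuous_intros)
      have dd: "-\<delta> \<le> \<delta>" using dp by simp
      obtain t where t: "-\<delta> \<le> t" "t \<le> \<delta>" "V t = 0" using IVT2'[of V \<delta> 0 "-\<delta>", OF V1 V2 _ Vc] dd by auto
      show "\<exists>t\<in>{-\<delta>..\<delta>}. hnormv (hmul (hinv (\<gamma> t)) x) \<le> hnormh (hmul (hinv (\<gamma> t)) x)"
      proof (intro bexI[of _ t])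
        show "t \<in> {-\<delta>..\<delta>}" using t by simp
        have "hnormv (hmul (hinv (\<gamma> t)) x) = 0" using t(3) unfolding V_def hvert_def hnormv_def by simp
        then show "hnormv (hmul (hinv (\<gamma> t)) x) \<le> hnormh (hmul (hinv (\<gamma> t)) x)" unfolding hnormh_def by simp
      qed
    qed
  qed
qed

end
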